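(* Let $(X,d)$ be a compact metric space and $f_{1,\infty}=\{f_n\}_{n=1}^\infty$ a sequence of continuous self-maps of $X$. If the induced non-autonomous system $(\mathcal{M}(X),\widetilde{f}_{1,\infty})$ is topologically transitive, then $(X,f_{1,\infty})$ satisfies Banks's condition.
   Context: For a sequence $f_{1,\infty}=\{f_n\}_{n\ge1}$ of continuous self-maps of $X$, write $f_1^n=f_n\circ\cdots\circ f_1$ and $f_1^{-n}=(f_1^n)^{-1}$ (preimage). $\mathcal{M}(X)$ is the space of Borel probability measures on $X$ with the weak$^*$ topology (equivalently the Prohorov metric), and the induced system $(\mathcal{M}(X),\widetilde{f}_{1,\infty})$ is given by $\widetilde{f}_1^n(\mu)(A)=\mu(f_1^{-n}(A))$ for Borel $A$ (push-forward). A non-autonomous system $(Y,g_{1,\infty})$ is topologically transitive if for every pair of non-empty open sets $U,V$ there is $n\in\mathbb{N}$ with $g_1^n(U)\cap V\ne\emptyset$. $(X,f_{1,\infty})$ satisfies Banks's condition if for any three non-empty open sets $U,V,W\subseteq X$ there is $n\in\mathbb{N}$ with $f_1^n(U)\cap V\neq\emptyset$ and $f_1^n(U)\cap W\ne\emptyset$. *)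

theory Defs
  imports "HOL-Probability.Probability"
begin

text \<open>Non-autonomous composition: comp_seq f n = f n o ... o f 1 (f 0 is unused), comp_seq f 0 = id.\<close>
primrec comp_seq :: "(nat \<Rightarrow> 'a \<Rightarrow> 'a) \<Rightarrow> nat \<Rightarrow> 'a \<Rightarrow> 'a" where
  "comp_seq f 0 = id"
| "comp_seq f (Suc n) = f (Suc n) \<circ> comp_seq f n"

text \<open>The space M(X) of Borel probability measures on X (X = the whole type).\<close>
definition prob_measures :: "'a::metric_space measure set" where
  "prob_measures = {\<mu>. sets \<mu> = sets borel \<and> prob_space \<mu>}"

definition weak_star_topology :: "'a::metric_space measure topology" where
  "weak_star_topology = topology_generated_by
     {{\<mu> \<in> prob_measures. (\<integral>x. g x \<partial>\<mu>) \<in> W} | g W. continuous_on UNIV g \<and> open (W::real set)}"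

definition induced_map :: "('a::metric_space \<Rightarrow> 'a) \<Rightarrow> 'a measure \<Rightarrow> 'a measure" where
  "induced_map h \<mu> = distr \<mu> borel h"

definition banks_condition :: "(nat \<Rightarrow> 'a::topological_space \<Rightarrow> 'a) \<Rightarrow> bool" where
  "banks_condition f \<longleftrightarrow> (\<forall>U V W. open U \<and> U \<noteq> {} \<and> open V \<and> V \<noteq> {} \<and> open W \<and> W \<noteq> {} \<longrightarrow>
     (\<exists>n\<ge>1. comp_seq f n ` U \<inter> V \<noteq> {} \<and> comp_seq f n ` U \<inter> W \<noteq> {}))"

definition induced_transitive :: "(nat \<Rightarrow> 'a::metric_space \<Rightarrow> 'a) \<Rightarrow> bool" where
  "induced_transitive f \<longleftrightarrow> (\<forall>U V. openin weak_star_topology U \<and> U \<noteq> {} \<and>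
     openin weak_star_topology V \<and> V \<noteq> {} \<longrightarrow>
     (\<exists>n\<ge>1. induced_map (comp_seq f n) ` U \<inter> V \<noteq> {}))"

end

theory Submission
  imports Defs
begin

definition bump :: "'a::metric_space \<Rightarrow> real \<Rightarrow> 'a \<Rightarrow> real" where
  "bump c r x = max 0 (1 - dist x c / r)"

lemma bump_cont: "r > 0 \<Longrightarrow> continuous_on UNIV (bump c r)"
  unfolding bump_def by (intro continuous_intros) auto

lemma bump_ge0: "bump c r x \<ge> 0" unfolding bump_def by simp
lemma bump_le1: "r > 0 \<Longrightarrow> bump c r x \<le> 1" unfolding bump_def by simp
lemma bump_c: "bump c r c = 1" unfolding bump_def by simp
lemma bump_pos: "r > 0 \<Longrightarrow> bump c r x > 0 \<Longrightarrow> x \<in> ball c r"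
  unfolding bump_def by (auto simp: dist_commute zero_less_divide_iff max_def split: if_splits)

lemma basic_open:
  assumes "continuous_on UNIV g" "open (W::real set)"
  shows "openin weak_star_topology {\<mu> \<in> prob_measures. (\<integral>x. g x \<partial>\<mu>) \<in> W}"
  unfolding weak_star_topology_def openin_topology_generated_by_iff
  by (rule generate_topology_on.Basis) (use assms in blast)

lemma comp_seq_cont:
  assumes "\<And>n. n \<ge> 1 \<Longrightarrow> continuous_on UNIV (f n)"
  shows "continuous_on UNIV (comp_seq f n)"
proof (induction n)
  case 0 then show ?case by (simp add: continuous_on_id)
next
  case (Suc n)
  have "continuous_on UNIV (f (Suc n))" using assms by simp
  then show ?case using Suc
    by (metis comp_seq.simps(2) continuous_on_compose continuous_on_subset subset_UNIV)
qed

lemma exists_big: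
  fixes h :: "'a::metric_space \<Rightarrow> real"
  assumes "\<mu> \<in> prob_measures" "continuous_on UNIV h" "\<And>x. \<bar>h x\<bar> \<le> B"
    and "(\<integral>x. h x \<partial>\<mu>) > 1"
  shows "\<exists>x. h x > 1"
proof (rule ccontr)
  assume "\<not> ?thesis"
  hence le: "\<And>x. h x \<le> 1" by (simp add: not_less)
  have ps: "prob_space \<mu>" and se: "sets \<mu> = sets borel" using assms(1) by (auto simp: prob_measures_def)
  have meas: "h \<in> borel_measurable \<mu>"
    using borel_measurable_continuous_onI[OF assms(2)] measurable_cong_sets[OF se refl] by blast
  have int: "integrable \<mu> h"
    using ps meas assms(3) by (intro prob_space.finite_measure[THEN finite_measure.integrable_const_bound, where B=B]) auto
  have "(\<integral>x. h x \<partial>\<mu>) \<le> (\<integral>x. 1 \<partial>\<mu>)"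
    using int ps le finite_measure.integrable_const[OF prob_space.finite_measure[OF ps]]
    by (intro integral_mono) auto
  also have "\<dots> = 1" using ps by (simp add: prob_space.prob_space)
  finally show False using assms(4) by simp
qed

theorem theorem3p4:
  fixes f :: "nat \<Rightarrow> 'a::metric_space \<Rightarrow> 'a"
  assumes "compact (UNIV :: 'a set)"
    and "\<And>n. n \<ge> 1 \<Longrightarrow> continuous_on UNIV (f n)"
    and "induced_transitive f"
  shows "banks_condition f"
  unfolding banks_condition_def
proof (intro allI impI)
  fix U V W :: "'a set"
  assume H: "open U \<and> U \<noteq> {} \<and> open V \<and> V \<noteq> {} \<and> open W \<and> W \<noteq> {}"
  obtain u where u: "u \<in> U" using H by blast
  obtain v where v: "v \<in> V" using H by blast
  obtain w where w: "w \<in> W" using H by blast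
  obtain ru where ru: "ru > 0" "ball u ru \<subseteq> U" using H u open_contains_ball by blast
  obtain rv where rv: "rv > 0" "ball v rv \<subseteq> V" using H v open_contains_ball by blast
  obtain rw where rw: "rw > 0" "ball w rw \<subseteq> W" using H w open_contains_ball by blast
  define gu where "gu = bump u ru"
  define gv where "gv = bump v rv"
  define gw where "gw = bump w rw"
  define A where "A = {\<mu> \<in> prob_measures. (\<integral>x. gu x \<partial>\<mu>) \<in> {2/3<..}}"
  define B1 where "B1 = {\<mu> \<in> prob_measures. (\<integral>x. gv x \<partial>\<mu>) \<in> {1/3<..}}"
  define B2 where "B2 = {\<mu> \<in> prob_measures. (\<integral>x. gw x \<partial>\<mu>) \<in> {1/3<..}}"
  have cu: "continuous_on UNIV gu" and cv: "continuous_on UNIV gv" and cw: "continuous_on UNIV gw"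
    unfolding gu_def gv_def gw_def using ru rv rw by (auto intro: bump_cont)
  have oA: "openin weak_star_topology A" unfolding A_def by (rule basic_open[OF cu]) simp
  have oB: "openin weak_star_topology (B1 \<inter> B2)" unfolding B1_def B2_def
    by (intro openin_Int basic_open cv cw) simp_all
  have retP: "return borel u \<in> prob_measures"
    by (simp add: prob_measures_def prob_space_return)
  have "(\<integral>x. gu x \<partial>return borel u) = 1"
    using integral_return[of u borel gu, OF _ borel_measurable_continuous_onI[OF cu]]
    by (simp add: gu_def bump_c)
  hence "return borel u \<in> A" using retP by (simp add: A_def)
  hence neA: "A \<noteq> {}" by blast
  define S where "S = {v, w}"
  have Sf: "finite S" "S \<noteq> {}" by (auto simp: S_def)
  define \<nu> where "\<nu> = distr (measure_pmf (pmf_of_set S)) borel id"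
  have nuP: "\<nu> \<in> prob_measures"
    unfolding prob_measures_def \<nu>_def
    by (auto intro!: measure_pmf.prob_space_distr)
  have cardS: "card S \<le> 2" "card S > 0" using Sf by (auto simp: S_def card_insert_if)
  have intS: "(\<integral>x. g x \<partial>\<nu>) > 1/3" if "continuous_on UNIV g" "\<And>x. g x \<ge> 0" "g v = 1 \<or> g w = 1" for g :: "'a \<Rightarrow> real"
  proof -
    have "(\<integral>x. g x \<partial>\<nu>) = sum g S / card S"
      unfolding \<nu>_def
      by (subst integral_distr) (auto intro: borel_measurable_continuous_onI[OF that(1)] simp: integral_pmf_of_set[OF Sf(2,1)])
    moreover have "sum g S \<ge> 1"
      using that(2,3) by (cases "v = w") (auto simp: S_def add_nonneg_nonneg)
    moreover have "sum g S / card S \<ge> sum g S / 2"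
      using cardS \<open>sum g S \<ge> 1\<close> by (intro divide_left_mono) auto
    ultimately show ?thesis using \<open>sum g S \<ge> 1\<close> by linarith
  qed
  have "\<nu> \<in> B1 \<inter> B2" unfolding B1_def B2_def using nuP intS[OF cv] intS[OF cw]
    by (auto simp: gv_def gw_def bump_ge0 bump_c)
  hence neB: "B1 \<inter> B2 \<noteq> {}" by blast
  obtain n where n: "n \<ge> 1" "induced_map (comp_seq f n) ` A \<inter> (B1 \<inter> B2) \<noteq> {}"
    using assms(3) oA oB neA neB unfolding induced_transitive_def by blast
  then obtain \<mu> where mu: "\<mu> \<in> A" "induced_map (comp_seq f n) \<mu> \<in> B1 \<inter> B2" by blast
  define F where "F = comp_seq f n"
  have cF: "continuous_on UNIV F" unfolding F_def by (rule comp_seq_cont[OF assms(2)])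
  have muP: "\<mu> \<in> prob_measures" using mu(1) A_def by blast
  have se: "sets \<mu> = sets borel" using muP by (simp add: prob_measures_def)
  have Fm: "F \<in> measurable \<mu> borel"
    using borel_measurable_continuous_onI[OF cF] measurable_cong_sets[OF se refl] by blast
  have push: "(\<integral>x. g x \<partial>induced_map F \<mu>) = (\<integral>x. g (F x) \<partial>\<mu>)" if "continuous_on UNIV g" for g :: "'a \<Rightarrow> real"
    unfolding induced_map_def
    by (rule integral_distr[OF Fm borel_measurable_continuous_onI[OF that]])
  have ps: "prob_space \<mu>" using muP by (simp add: prob_measures_def)
  have gm: "g \<in> borel_measurable \<mu>" if "continuous_on UNIV g" for g :: "'a \<Rightarrow> real"
    using borel_measurable_continuous_onI[OF that] measurable_cong_sets[OF se refl] by blast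
  have intg: "integrable \<mu> g" if "continuous_on UNIV g" "\<And>x. \<bar>g x\<bar> \<le> 1" for g :: "'a \<Rightarrow> real"
    using ps gm[OF that(1)] that(2)
    by (intro prob_space.finite_measure[THEN finite_measure.integrable_const_bound, where B=1]) auto
  have gabs: "\<bar>bump c r x\<bar> \<le> 1" if "r > 0" for c r x
    using bump_ge0[of c r x] bump_le1[OF that, of c x] by simp
  have cgvF: "continuous_on UNIV (\<lambda>x. gv (F x))" and cgwF: "continuous_on UNIV (\<lambda>x. gw (F x))"
    using continuous_on_compose[OF cF, of gv] continuous_on_compose[OF cF, of gw] cv cw
    by (auto simp: o_def intro: continuous_on_subset)
  have I1: "(\<integral>x. gu x \<partial>\<mu>) > 2/3" using mu(1) by (simp add: A_def)
  have I2: "(\<integral>x. gv (F x) \<partial>\<mu>) > 1/3" using mu(2) push[OF cv] by (simp add: B1_def F_def)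
  have I3: "(\<integral>x. gw (F x) \<partial>\<mu>) > 1/3" using mu(2) push[OF cw] by (simp add: B2_def F_def)
  have key: "\<exists>x \<in> U. F x \<in> Z" if "continuous_on UNIV (\<lambda>x. g (F x))" "\<And>x. \<bar>g (F x)\<bar> \<le> 1"
      "(\<integral>x. g (F x) \<partial>\<mu>) > 1/3" "g = bump z r" "r > 0" "ball z r \<subseteq> Z" for g z r Z
  proof -
    have "(\<integral>x. gu x + g (F x) \<partial>\<mu>) = (\<integral>x. gu x \<partial>\<mu>) + (\<integral>x. g (F x) \<partial>\<mu>)"
      by (rule Bochner_Integration.integral_add; rule intg) (use cu that gabs ru in \<open>auto simp: gu_def\<close>)
    also have "\<dots> > 1" using I1 that(3) by simp
    moreover have bd: "\<bar>gu x + g (F x)\<bar> \<le> 2" for x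
      using that(2)[of x] gabs[OF ru(1), of u x] unfolding gu_def by linarith
    ultimately have "\<exists>x. gu x + g (F x) > 1"
      by (intro exists_big[OF muP, where B=2]) (use cu that in \<open>auto intro!: continuous_intros\<close>)
    then obtain x where x: "gu x + g (F x) > 1" by blast
    have "gu x > 0" using x bump_le1[OF that(5)] that(4) by (smt (verit))
    hence "x \<in> U" using bump_pos[OF ru(1), of u x] ru(2) unfolding gu_def by blast
    moreover have "g (F x) > 0" using x bump_le1[OF ru(1)] by (smt (verit) gu_def)
    hence "F x \<in> Z" using bump_pos[OF that(5), of z "F x"] that(4,6) by blast
    ultimately show ?thesis by blast
  qed
  have "\<exists>x \<in> U. F x \<in> V"
    by (rule key[OF cgvF _ I2 gv_def rv]) (use gabs rv in \<open>auto simp: gv_def\<close>)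
  moreover have "\<exists>x \<in> U. F x \<in> W"
    by (rule key[OF cgwF _ I3 gw_def rw]) (use gabs rw in \<open>auto simp: gw_def\<close>)
  ultimately show "\<exists>n\<ge>1. comp_seq f n ` U \<inter> V \<noteq> {} \<and> comp_seq f n ` U \<inter> W \<noteq> {}"
    using n(1) unfolding F_def by blast
qed

end
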